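(* Let $\Lambda<\Gamma$, let $\mathcal R$ be a set of representatives of the cosets $\Lambda\gamma$ with $e\in\mathcal R$, and let $\mathcal H$ be a Hilbert space. For maps $\mu,\mu_1,\mu_2:\Lambda\to U(\mathcal H)$ with induced maps $\overline\mu,\overline\mu_1,\overline\mu_2:\Gamma\to U(\ell^2(\mathcal R,\mathcal H))$ one has: (1) $\mathrm{def}(\overline\mu)=\mathrm{def}(\mu)$; (2) $\|\overline\mu_1-\overline\mu_2\|=\|\mu_1-\mu_2\|$; (3) $D(\overline\mu)\le D(\mu)$.
   Context: Let $r:\Gamma\to\mathcal R$ be the retraction $r(\gamma)=$ the unique element of $\Lambda\gamma\cap\mathcal R$. For $\mu:\Lambda\to U(\mathcal H)$ the induced map $\overline\mu:\Gamma\to U(\ell^2(\mathcal R,\mathcal H))$ is $(\overline\mu(\gamma)f)(x)=\mu(x\gamma\, r(x\gamma)^{-1})\,f(r(x\gamma))$ for $f\in\ell^2(\mathcal R,\mathcal H)$, $x\in\mathcal R$. For maps into $U(\mathcal L)$: $\|\mu-\nu\|=\sup_\gamma\|\mu(\gamma)-\nu(\gamma)\|$ (operator norm), $D(\mu)=\inf\{\|\mu-\nu\|:\nu$ a unitary representation on the same space$\}$, $\mathrm{def}(\mu)=\sup_{x,y}\|\mu(xy)-\mu(x)\mu(y)\|$. *)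

theory Defs
  imports "HOL-Analysis.Analysis" "HOL-Algebra.Coset"
begin

text \<open>A (real) normed space given explicitly by its carrier, operations, norm and a
  complex structure J (multiplication by i).  A complex Hilbert space is modelled as a real
  Hilbert space together with such a J; complex-linear maps are the real-linear maps
  commuting with J.\<close>

record 'v nspace =
  vcarrier :: "'v set"
  vadd :: "'v \<Rightarrow> 'v \<Rightarrow> 'v"
  vscale :: "real \<Rightarrow> 'v \<Rightarrow> 'v"
  vsub :: "'v \<Rightarrow> 'v \<Rightarrow> 'v"
  vnorm :: "'v \<Rightarrow> real"
  vJ :: "'v \<Rightarrow> 'v"

definition complex_structure :: "('h::real_inner \<Rightarrow> 'h) \<Rightarrow> bool" where
  "complex_structure J \<longleftrightarrow> linear J \<and> (\<forall>x. J (J x) = - x) \<and> (\<forall>x y. inner (J x) (J y) = inner x y)"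

definition H_sp :: "('h::real_normed_vector \<Rightarrow> 'h) \<Rightarrow> 'h nspace" where
  "H_sp J = \<lparr>vcarrier = UNIV, vadd = (+), vscale = scaleR, vsub = (-), vnorm = norm, vJ = J\<rparr>"

definition l2space :: "'g set \<Rightarrow> ('g \<Rightarrow> 'h::real_normed_vector) set" where
  "l2space R = {f. (\<forall>x. x \<notin> R \<longrightarrow> f x = 0) \<and> (\<lambda>x. (norm (f x))\<^sup>2) summable_on R}"

definition l2norm :: "'g set \<Rightarrow> ('g \<Rightarrow> 'h::real_normed_vector) \<Rightarrow> real" where
  "l2norm R f = sqrt (\<Sum>\<^sub>\<infinity>x\<in>R. (norm (f x))\<^sup>2)"

definition l2_sp :: "'g set \<Rightarrow> ('h::real_normed_vector \<Rightarrow> 'h) \<Rightarrow> ('g \<Rightarrow> 'h) nspace" where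
  "l2_sp R J = \<lparr>vcarrier = l2space R, vadd = (\<lambda>f g x. f x + g x), vscale = (\<lambda>c f x. c *\<^sub>R f x),
      vsub = (\<lambda>f g x. f x - g x), vnorm = l2norm R, vJ = (\<lambda>f x. J (f x))\<rparr>"

definition unitary_op :: "('v, 'm) nspace_scheme \<Rightarrow> ('v \<Rightarrow> 'v) \<Rightarrow> bool" where
  "unitary_op V U \<longleftrightarrow> U ` vcarrier V = vcarrier V
     \<and> (\<forall>x\<in>vcarrier V. \<forall>y\<in>vcarrier V. U (vadd V x y) = vadd V (U x) (U y))
     \<and> (\<forall>c. \<forall>x\<in>vcarrier V. U (vscale V c x) = vscale V c (U x))
     \<and> (\<forall>x\<in>vcarrier V. U (vJ V x) = vJ V (U x))
     \<and> (\<forall>x\<in>vcarrier V. vnorm V (U x) = vnorm V x)"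

definition op_dist :: "('v, 'm) nspace_scheme \<Rightarrow> ('v \<Rightarrow> 'v) \<Rightarrow> ('v \<Rightarrow> 'v) \<Rightarrow> real" where
  "op_dist V U W = Sup ((\<lambda>v. vnorm V (vsub V (U v) (W v))) ` {v \<in> vcarrier V. vnorm V v \<le> 1})"

definition map_dist :: "('v, 'm) nspace_scheme \<Rightarrow> ('g, 'b) monoid_scheme
    \<Rightarrow> ('g \<Rightarrow> 'v \<Rightarrow> 'v) \<Rightarrow> ('g \<Rightarrow> 'v \<Rightarrow> 'v) \<Rightarrow> real" where
  "map_dist V K \<mu> \<nu> = Sup ((\<lambda>g. op_dist V (\<mu> g) (\<nu> g)) ` carrier K)"

definition defect :: "('v, 'm) nspace_scheme \<Rightarrow> ('g, 'b) monoid_scheme \<Rightarrow> ('g \<Rightarrow> 'v \<Rightarrow> 'v) \<Rightarrow> real" where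
  "defect V K \<mu> = Sup ((\<lambda>(x, y). op_dist V (\<mu> (x \<otimes>\<^bsub>K\<^esub> y)) (\<mu> x \<circ> \<mu> y)) ` (carrier K \<times> carrier K))"

definition unitary_rep :: "('v, 'm) nspace_scheme \<Rightarrow> ('g, 'b) monoid_scheme \<Rightarrow> ('g \<Rightarrow> 'v \<Rightarrow> 'v) \<Rightarrow> bool" where
  "unitary_rep V K \<nu> \<longleftrightarrow> (\<forall>g\<in>carrier K. unitary_op V (\<nu> g))
     \<and> (\<forall>x\<in>carrier K. \<forall>y\<in>carrier K. \<forall>v\<in>vcarrier V. \<nu> (x \<otimes>\<^bsub>K\<^esub> y) v = \<nu> x (\<nu> y v))"

definition dist_rep :: "('v, 'm) nspace_scheme \<Rightarrow> ('g, 'b) monoid_scheme \<Rightarrow> ('g \<Rightarrow> 'v \<Rightarrow> 'v) \<Rightarrow> real" where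
  "dist_rep V K \<mu> = Inf ((\<lambda>\<nu>. map_dist V K \<mu> \<nu>) ` {\<nu>. unitary_rep V K \<nu>})"

definition coset_retr :: "('g, 'b) monoid_scheme \<Rightarrow> 'g set \<Rightarrow> 'g set \<Rightarrow> 'g \<Rightarrow> 'g" where
  "coset_retr G L R g = (THE r. r \<in> R \<and> r \<in> L #>\<^bsub>G\<^esub> g)"

definition induced :: "('g, 'b) monoid_scheme \<Rightarrow> 'g set \<Rightarrow> 'g set
    \<Rightarrow> ('g \<Rightarrow> 'h \<Rightarrow> 'h::zero) \<Rightarrow> 'g \<Rightarrow> ('g \<Rightarrow> 'h) \<Rightarrow> ('g \<Rightarrow> 'h)" where
  "induced G L R \<mu> \<gamma> f = (\<lambda>x. if x \<in> R then
      \<mu> (x \<otimes>\<^bsub>G\<^esub> \<gamma> \<otimes>\<^bsub>G\<^esub> inv\<^bsub>G\<^esub> (coset_retr G L R (x \<otimes>\<^bsub>G\<^esub> \<gamma>)))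
        (f (coset_retr G L R (x \<otimes>\<^bsub>G\<^esub> \<gamma>)))
    else 0)"

end

theory Submission
  imports Defs
begin


locale indsetup = group G for G :: "('g,'b) monoid_scheme" (structure) +
  fixes L R :: "'g set"
  assumes sub: "subgroup L G" and Rc: "R \<subseteq> carrier G"
    and uniq: "\<forall>g\<in>carrier G. \<exists>!r. r \<in> R \<and> r \<in> L #> g"
    and oneR: "\<one> \<in> R"
begin

abbreviation rr where "rr g \<equiv> coset_retr G L R g"

lemma Lc: "l \<in> L \<Longrightarrow> l \<in> carrier G" by (rule subgroup.mem_carrier[OF sub])

lemma mem_rcos: "y \<in> L #> g \<longleftrightarrow> (\<exists>l\<in>L. y = l \<otimes> g)"
  unfolding r_coset_def by auto

lemma r_prop: "g \<in> carrier G \<Longrightarrow> rr g \<in> R \<and> rr g \<in> L #> g"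
proof -
  assume "g \<in> carrier G"
  hence "\<exists>!r. r \<in> R \<and> r \<in> L #> g" using uniq by blast
  from theI'[OF this] show ?thesis unfolding coset_retr_def .
qed

lemma r_eq: "g \<in> carrier G \<Longrightarrow> y \<in> R \<Longrightarrow> y \<in> L #> g \<Longrightarrow> rr g = y"
proof -
  assume "g \<in> carrier G" "y \<in> R" "y \<in> L #> g"
  moreover hence "\<exists>!r. r \<in> R \<and> r \<in> L #> g" using uniq by blast
  ultimately show ?thesis unfolding coset_retr_def by (intro the1_equality) auto
qed

lemma rR: "g \<in> carrier G \<Longrightarrow> rr g \<in> R" using r_prop by blast
lemma rc: "g \<in> carrier G \<Longrightarrow> rr g \<in> carrier G" using rR Rc by blast

lemma c_in_L: assumes "g \<in> carrier G" shows "g \<otimes> inv (rr g) \<in> L"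
proof -
  obtain l where l: "l \<in> L" "rr g = l \<otimes> g" using r_prop[OF assms] mem_rcos by blast
  have "g \<otimes> inv (rr g) = inv l"
    using l assms Lc by (simp add: inv_mult_group m_assoc[symmetric])
  thus ?thesis using l sub subgroup.m_inv_closed by metis
qed

lemma r_R: "x \<in> R \<Longrightarrow> rr x = x"
  using Rc by (intro r_eq) (auto simp: mem_rcos intro!: bexI[of _ \<one>] subgroup.one_closed[OF sub])

lemma r_L: "l \<in> L \<Longrightarrow> rr l = \<one>"
proof -
  assume l: "l \<in> L"
  have "\<one> = inv l \<otimes> l" using Lc l by simp
  moreover have "inv l \<in> L" using l sub subgroup.m_inv_closed by metis
  ultimately show ?thesis using l Lc oneR by (intro r_eq) (auto simp: mem_rcos intro!: bexI[of _ "inv l"])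
qed

lemma r_comp: assumes "g \<in> carrier G" "d \<in> carrier G"
  shows "rr (rr g \<otimes> d) = rr (g \<otimes> d)"
proof -
  obtain l where l: "l \<in> L" "rr g = l \<otimes> g" using r_prop[OF assms(1)] mem_rcos by blast
  obtain l' where l': "l' \<in> L" "rr (g \<otimes> d) = l' \<otimes> (g \<otimes> d)" using r_prop assms mem_rcos by blast
  have "rr (g \<otimes> d) = (l' \<otimes> inv l) \<otimes> (rr g \<otimes> d)"
    using l l' assms Lc by (simp add: m_assoc[symmetric] inv_mult_group)
       (simp add: m_assoc)
  moreover have "l' \<otimes> inv l \<in> L" using l l' sub subgroup.m_inv_closed subgroup.m_closed by metis
  ultimately have "rr (g \<otimes> d) \<in> L #> (rr g \<otimes> d)" by (auto simp: mem_rcos)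
  thus ?thesis by (rule r_eq[OF m_closed[OF rc[OF assms(1)] assms(2)] rR[OF m_closed[OF assms]]])
qed

lemma c_comp: assumes "x \<in> carrier G" "g \<in> carrier G" "d \<in> carrier G"
  shows "(x \<otimes> g \<otimes> inv rr (x \<otimes> g)) \<otimes> (rr (x \<otimes> g) \<otimes> d \<otimes> inv rr (rr (x \<otimes> g) \<otimes> d))
     = x \<otimes> (g \<otimes> d) \<otimes> inv rr (x \<otimes> (g \<otimes> d))"
proof -
  have e: "rr (rr (x \<otimes> g) \<otimes> d) = rr (x \<otimes> (g \<otimes> d))" using r_comp assms by (simp add: m_assoc)
  have c: "inv a \<otimes> (a \<otimes> z) = z" if "a \<in> carrier G" "z \<in> carrier G" for a z
    using that by (simp add: m_assoc[symmetric])
  show ?thesis unfolding e using assms rc by (simp add: m_assoc c)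
qed

lemma r_one_iff: assumes "x \<in> R" "g \<in> L" shows "rr (x \<otimes> g) = \<one> \<longleftrightarrow> x = \<one>"
proof
  assume h: "rr (x \<otimes> g) = \<one>"
  have xc: "x \<in> carrier G" using assms Rc by blast
  have "x \<otimes> g \<otimes> inv \<one> \<in> L" using c_in_L[of "x \<otimes> g"] h xc Lc assms by simp
  hence "x \<otimes> g \<in> L" using xc Lc assms by simp
  hence "x \<otimes> g \<otimes> inv g \<in> L" using assms sub subgroup.m_inv_closed subgroup.m_closed by metis
  hence "x \<in> L" using xc Lc assms by (simp add: m_assoc)
  thus "x = \<one>" using r_L r_R assms by metis
next
  assume "x = \<one>" thus "rr (x \<otimes> g) = \<one>" using assms Lc r_L by simp
qed

lemma sig_bij: assumes "g \<in> carrier G" shows "bij_betw (\<lambda>x. rr (x \<otimes> g)) R R"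
proof (rule bij_betw_byWitness[where f'="\<lambda>x. rr (x \<otimes> inv g)"])
  show "\<forall>a\<in>R. rr (rr (a \<otimes> g) \<otimes> inv g) = a"
  proof
    fix a assume a: "a \<in> R" hence ac: "a \<in> carrier G" using Rc by blast
    have "rr (rr (a \<otimes> g) \<otimes> inv g) = rr (a \<otimes> g \<otimes> inv g)" using r_comp ac assms by simp
    also have "a \<otimes> g \<otimes> inv g = a" using ac assms by (simp add: m_assoc)
    finally show "rr (rr (a \<otimes> g) \<otimes> inv g) = a" using r_R a by simp
  qed
  show "\<forall>a\<in>R. rr (rr (a \<otimes> inv g) \<otimes> g) = a"
  proof
    fix a assume a: "a \<in> R" hence ac: "a \<in> carrier G" using Rc by blast
    have "rr (rr (a \<otimes> inv g) \<otimes> g) = rr (a \<otimes> inv g \<otimes> g)" using r_comp ac assms by simp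
    also have "a \<otimes> inv g \<otimes> g = a" using ac assms by (simp add: m_assoc)
    finally show "rr (rr (a \<otimes> inv g) \<otimes> g) = a" using r_R a by simp
  qed
  show "(\<lambda>x. rr (x \<otimes> g)) ` R \<subseteq> R" using assms Rc rR by auto
  show "(\<lambda>x. rr (x \<otimes> inv g)) ` R \<subseteq> R" using assms Rc rR by auto
qed

end


definition uiso :: "('h::real_normed_vector \<Rightarrow> 'h) \<Rightarrow> bool" where
  "uiso A \<longleftrightarrow> (\<forall>c v. A (c *\<^sub>R v) = c *\<^sub>R A v) \<and> (\<forall>v. norm (A v) = norm v)"

lemma uiso_0: "uiso A \<Longrightarrow> A 0 = 0"
  unfolding uiso_def by (metis scaleR_zero_left)

lemma uiso_comp: "uiso A \<Longrightarrow> uiso B \<Longrightarrow> uiso (A \<circ> B)"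
  unfolding uiso_def by simp

lemma unit_uiso: "unitary_op (H_sp J) U \<Longrightarrow> uiso U"
  by (simp add: unitary_op_def H_sp_def uiso_def)

lemma hop_eq: "op_dist (H_sp J) A B = Sup ((\<lambda>v. norm (A v - B v)) ` {v. norm v \<le> 1})"
  by (simp add: op_dist_def H_sp_def)

lemma hop_el: assumes "uiso A" "uiso B" "norm v \<le> 1" shows "norm (A v - B v) \<le> 2"
proof -
  have "norm (A v - B v) \<le> norm (A v) + norm (B v)" by (rule norm_triangle_ineq4)
  also have "\<dots> = 2 * norm v" using assms unfolding uiso_def by simp
  finally show ?thesis using assms(3) by simp
qed

lemma hop_bdd: assumes "uiso A" "uiso B"
  shows "bdd_above ((\<lambda>v. norm (A v - B v)) ` {v. norm v \<le> 1})"
  using hop_el[OF assms] by (intro bdd_aboveI2) auto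

lemma hop_upper: assumes "uiso A" "uiso B" "norm v \<le> 1"
  shows "norm (A v - B v) \<le> op_dist (H_sp J) A B"
  unfolding hop_eq using assms hop_bdd[OF assms(1,2)] by (intro cSup_upper) auto

lemma hop_least: assumes "\<And>v. norm v \<le> 1 \<Longrightarrow> norm (A v - B v) \<le> M"
  shows "op_dist (H_sp J) A B \<le> M"
  unfolding hop_eq using assms by (intro cSup_least) (auto intro: exI[of _ 0])

lemma hop_range: assumes "uiso A" "uiso B"
  shows "0 \<le> op_dist (H_sp J) A B" "op_dist (H_sp J) A B \<le> 2"
proof -
  have "norm (A 0 - B 0) \<le> op_dist (H_sp J) A B" by (rule hop_upper[OF assms]) simp
  thus "0 \<le> op_dist (H_sp J) A B" by (meson norm_ge_zero order_trans)
  show "op_dist (H_sp J) A B \<le> 2" by (rule hop_least) (rule hop_el[OF assms])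
qed

lemma hop_mul: assumes "uiso A" "uiso B"
  shows "norm (A v - B v) \<le> op_dist (H_sp J) A B * norm v"
proof (cases "v = 0")
  case True thus ?thesis using uiso_0[OF assms(1)] uiso_0[OF assms(2)] by simp
next
  case False
  define u where "u = (1 / norm v) *\<^sub>R v"
  have nu: "norm u = 1" using False by (simp add: u_def)
  have vu: "v = norm v *\<^sub>R u" using False by (simp add: u_def)
  have "A v - B v = norm v *\<^sub>R (A u - B u)"
    using assms vu unfolding uiso_def by (metis scaleR_diff_right)
  hence "norm (A v - B v) = norm v * norm (A u - B u)" by simp
  also have "\<dots> \<le> norm v * op_dist (H_sp J) A B"
    using hop_upper[OF assms, of u] nu by (intro mult_left_mono) auto
  finally show ?thesis by (simp add: mult.commute)
qed

lemma l2_bound: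
  fixes h f :: "'g \<Rightarrow> 'h::real_normed_vector"
  assumes \<sigma>: "bij_betw \<sigma> R R" and fs: "(\<lambda>x. (norm (f x))\<^sup>2) summable_on R" and M: "M \<ge> 0"
    and hb: "\<And>x. x \<in> R \<Longrightarrow> norm (h x) \<le> M * norm (f (\<sigma> x))"
  shows "l2norm R h \<le> M * l2norm R f"
proof -
  have s1: "(\<lambda>x. (norm (f (\<sigma> x)))\<^sup>2) summable_on R"
    using summable_on_reindex_bij_betw[OF \<sigma>, of "\<lambda>x. (norm (f x))\<^sup>2"] fs by simp
  have e1: "(\<Sum>\<^sub>\<infinity>x\<in>R. (norm (f (\<sigma> x)))\<^sup>2) = (\<Sum>\<^sub>\<infinity>x\<in>R. (norm (f x))\<^sup>2)"
    using infsum_reindex_bij_betw[OF \<sigma>, of "\<lambda>x. (norm (f x))\<^sup>2"] by simp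
  have "(\<Sum>\<^sub>\<infinity>x\<in>R. (norm (h x))\<^sup>2) \<le> (\<Sum>\<^sub>\<infinity>x\<in>R. M\<^sup>2 * (norm (f (\<sigma> x)))\<^sup>2)"
  proof (cases "(\<lambda>x. (norm (h x))\<^sup>2) summable_on R")
    case True
    show ?thesis
    proof (rule infsum_mono[OF True summable_on_cmult_right[OF s1]])
      fix x assume "x \<in> R"
      hence "norm (h x) \<le> M * norm (f (\<sigma> x))" by (rule hb)
      hence "(norm (h x))\<^sup>2 \<le> (M * norm (f (\<sigma> x)))\<^sup>2" by (intro power_mono) auto
      thus "(norm (h x))\<^sup>2 \<le> M\<^sup>2 * (norm (f (\<sigma> x)))\<^sup>2" by (simp add: power_mult_distrib)
    qed
  next
    case False
    hence "(\<Sum>\<^sub>\<infinity>x\<in>R. (norm (h x))\<^sup>2) = 0" by (rule infsum_not_exists)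
    moreover have "0 \<le> (\<Sum>\<^sub>\<infinity>x\<in>R. M\<^sup>2 * (norm (f (\<sigma> x)))\<^sup>2)" by (intro infsum_nonneg) auto
    ultimately show ?thesis by simp
  qed
  also have "\<dots> = M\<^sup>2 * (\<Sum>\<^sub>\<infinity>x\<in>R. (norm (f x))\<^sup>2)"
    using infsum_cmult_right[of "M\<^sup>2" "\<lambda>x. (norm (f (\<sigma> x)))\<^sup>2" R] s1 e1 by simp
  finally have le: "(\<Sum>\<^sub>\<infinity>x\<in>R. (norm (h x))\<^sup>2) \<le> M\<^sup>2 * (\<Sum>\<^sub>\<infinity>x\<in>R. (norm (f x))\<^sup>2)" .
  have "l2norm R h \<le> sqrt (M\<^sup>2 * (\<Sum>\<^sub>\<infinity>x\<in>R. (norm (f x))\<^sup>2))"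
    unfolding l2norm_def using le by (rule real_sqrt_le_mono)
  also have "\<dots> = M * l2norm R f" using M by (simp add: l2norm_def real_sqrt_mult)
  finally show ?thesis .
qed

lemma l2_delta:
  assumes "e \<in> R"
  shows "l2norm R (\<lambda>x. if x = e then w else 0) = norm w"
    "(\<lambda>x. if x = e then w else 0) \<in> l2space R"
proof -
  have "(\<Sum>\<^sub>\<infinity>x\<in>R. (norm (if x = e then w else 0))\<^sup>2) = (\<Sum>\<^sub>\<infinity>x\<in>{e}. (norm w)\<^sup>2)"
    by (rule infsum_cong_neutral) (use assms in auto)
  thus "l2norm R (\<lambda>x. if x = e then w else 0) = norm w" by (simp add: l2norm_def)
  have "(\<lambda>x. (norm (if x = e then w else 0))\<^sup>2) summable_on R \<longleftrightarrow> (\<lambda>x. (norm w)\<^sup>2) summable_on {e}"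
    by (rule summable_on_cong_neutral) (use assms in auto)
  thus "(\<lambda>x. if x = e then w else 0) \<in> l2space R" using assms by (auto simp: l2space_def)
qed

lemma l2_zero: "(\<lambda>x. 0) \<in> l2space R" "l2norm R (\<lambda>x. 0) = 0"
  by (auto simp: l2space_def l2norm_def)

lemma l2opd_eq: "op_dist (l2_sp R J) U W
   = Sup ((\<lambda>f. l2norm R (\<lambda>x. U f x - W f x)) ` {f \<in> l2space R. l2norm R f \<le> 1})"
  by (simp add: op_dist_def l2_sp_def)

lemma l2_upper:
  fixes \<Phi> :: "'g \<Rightarrow> 'h \<Rightarrow> 'h::real_normed_vector"
  assumes \<sigma>: "bij_betw \<sigma> R R"
    and \<Phi>b: "\<And>x v. x \<in> R \<Longrightarrow> norm (\<Phi> x v) \<le> M * norm v" and M: "M \<ge> 0"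
    and UW: "\<And>f x. f \<in> l2space R \<Longrightarrow> x \<in> R \<Longrightarrow> U f x - W f x = \<Phi> x (f (\<sigma> x))"
  shows "bdd_above ((\<lambda>f. l2norm R (\<lambda>x. U f x - W f x)) ` {f \<in> l2space R. l2norm R f \<le> 1})"
    "op_dist (l2_sp R J) U W \<le> M"
proof -
  have el: "l2norm R (\<lambda>x. U f x - W f x) \<le> M" if f: "f \<in> l2space R" "l2norm R f \<le> 1" for f
  proof -
    have "l2norm R (\<lambda>x. U f x - W f x) \<le> M * l2norm R f"
      by (rule l2_bound[OF \<sigma> _ M]) (use f UW \<Phi>b in \<open>auto simp: l2space_def\<close>)
    also have "\<dots> \<le> M * 1" using f M by (intro mult_left_mono) auto
    finally show ?thesis by simp
  qed
  thus "bdd_above ((\<lambda>f. l2norm R (\<lambda>x. U f x - W f x)) ` {f \<in> l2space R. l2norm R f \<le> 1})"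
    by (intro bdd_aboveI2) auto
  have ne: "{f \<in> l2space R. l2norm R f \<le> 1} \<noteq> {}"
  proof -
    have "(\<lambda>x. 0) \<in> {f \<in> l2space R. l2norm R f \<le> 1}" by (simp add: l2space_def l2norm_def)
    thus ?thesis by blast
  qed
  show "op_dist (l2_sp R J) U W \<le> M"
    unfolding l2opd_eq using ne el by (intro cSup_least) auto
qed

lemma l2_lower:
  fixes \<Phi> :: "'g \<Rightarrow> 'h \<Rightarrow> 'h::real_normed_vector"
  assumes eR: "e \<in> R" and \<sigma>e: "\<And>x. x \<in> R \<Longrightarrow> \<sigma> x = e \<longleftrightarrow> x = e"
    and \<Phi>0: "\<And>x. x \<in> R \<Longrightarrow> \<Phi> x 0 = 0"
    and UW: "\<And>f x. f \<in> l2space R \<Longrightarrow> x \<in> R \<Longrightarrow> U f x - W f x = \<Phi> x (f (\<sigma> x))"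
    and bdd: "bdd_above ((\<lambda>f. l2norm R (\<lambda>x. U f x - W f x)) ` {f \<in> l2space R. l2norm R f \<le> 1})"
    and v: "norm v \<le> 1"
  shows "norm (\<Phi> e v) \<le> op_dist (l2_sp R J) U W"
proof -
  define d where "d = (\<lambda>x. if x = e then v else (0::'h))"
  have d: "d \<in> l2space R" "l2norm R d = norm v" using l2_delta[OF eR] by (auto simp: d_def)
  have "l2norm R (\<lambda>x. U d x - W d x) = l2norm R (\<lambda>x. if x = e then \<Phi> e v else 0)"
    unfolding l2norm_def
  proof (rule arg_cong[where f=sqrt], rule infsum_cong)
    fix x assume x: "x \<in> R"
    show "(norm (U d x - W d x))\<^sup>2 = (norm (if x = e then \<Phi> e v else 0))\<^sup>2"
      using UW[OF d(1) x] \<sigma>e[OF x] \<Phi>0[OF x] by (auto simp: d_def)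
  qed
  also have "\<dots> = norm (\<Phi> e v)" by (rule l2_delta[OF eR])
  finally have eq: "l2norm R (\<lambda>x. U d x - W d x) = norm (\<Phi> e v)" .
  have "l2norm R (\<lambda>x. U d x - W d x) \<le> op_dist (l2_sp R J) U W"
    unfolding l2opd_eq using d v by (intro cSup_upper[OF _ bdd]) auto
  thus ?thesis using eq by simp
qed

definition l2pres :: "'g set \<Rightarrow> (('g \<Rightarrow> 'h::real_normed_vector) \<Rightarrow> ('g \<Rightarrow> 'h)) \<Rightarrow> bool" where
  "l2pres R U \<longleftrightarrow> (\<forall>f\<in>l2space R. U f \<in> l2space R \<and> l2norm R (U f) = l2norm R f)"

lemma l2_diff2:
  fixes f g :: "'g \<Rightarrow> 'h::real_normed_vector"
  assumes "f \<in> l2space R" "g \<in> l2space R" "l2norm R f \<le> 1" "l2norm R g \<le> 1"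
  shows "l2norm R (\<lambda>x. f x - g x) \<le> 2"
proof -
  let ?N = "\<lambda>f. (\<Sum>\<^sub>\<infinity>x\<in>R. (norm (f x))\<^sup>2)"
  have sf: "(\<lambda>x. (norm (f x))\<^sup>2) summable_on R" and sg: "(\<lambda>x. (norm (g x))\<^sup>2) summable_on R"
    using assms by (auto simp: l2space_def)
  have N1: "?N f \<le> 1" if "l2norm R f \<le> 1" for f :: "'g \<Rightarrow> 'h"
  proof -
    have "0 \<le> ?N f" by (intro infsum_nonneg) auto
    thus ?thesis using that unfolding l2norm_def by (simp add: real_sqrt_le_1_iff)
  qed
  have "?N (\<lambda>x. f x - g x) \<le> (\<Sum>\<^sub>\<infinity>x\<in>R. 2 * (norm (f x))\<^sup>2 + 2 * (norm (g x))\<^sup>2)"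
  proof (cases "(\<lambda>x. (norm (f x - g x))\<^sup>2) summable_on R")
    case True
    show ?thesis
    proof (rule infsum_mono[OF True])
      show "(\<lambda>x. 2 * (norm (f x))\<^sup>2 + 2 * (norm (g x))\<^sup>2) summable_on R"
        by (intro summable_on_add summable_on_cmult_right sf sg)
      fix x
      have "norm (f x - g x) \<le> norm (f x) + norm (g x)" by (rule norm_triangle_ineq4)
      hence "(norm (f x - g x))\<^sup>2 \<le> (norm (f x) + norm (g x))\<^sup>2" by (intro power_mono) auto
      also have "\<dots> \<le> 2 * (norm (f x))\<^sup>2 + 2 * (norm (g x))\<^sup>2"
        using sum_squares_ge_zero[of "norm (f x) - norm (g x)" 0] by (simp add: power2_eq_square algebra_simps)
      finally show "(norm (f x - g x))\<^sup>2 \<le> 2 * (norm (f x))\<^sup>2 + 2 * (norm (g x))\<^sup>2" .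
    qed
  next
    case False
    hence "?N (\<lambda>x. f x - g x) = 0" by (simp add: infsum_not_exists)
    moreover have "0 \<le> (\<Sum>\<^sub>\<infinity>x\<in>R. 2 * (norm (f x))\<^sup>2 + 2 * (norm (g x))\<^sup>2)" by (intro infsum_nonneg) auto
    ultimately show ?thesis by simp
  qed
  also have "\<dots> = 2 * ?N f + 2 * ?N g"
    using infsum_add[OF summable_on_cmult_right[OF sf] summable_on_cmult_right[OF sg], of 2 2]
      infsum_cmult_right[of 2 "\<lambda>x. (norm (f x))\<^sup>2" R] infsum_cmult_right[of 2 "\<lambda>x. (norm (g x))\<^sup>2" R] sf sg
    by simp
  also have "\<dots> \<le> 4" using N1[OF assms(3)] N1[OF assms(4)] by simp
  finally have "?N (\<lambda>x. f x - g x) \<le> 4" .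
  hence "l2norm R (\<lambda>x. f x - g x) \<le> sqrt 4" unfolding l2norm_def by (rule real_sqrt_le_mono)
  thus ?thesis by simp
qed

lemma l2opd_range: assumes "l2pres R U" "l2pres R W"
  shows "0 \<le> op_dist (l2_sp R J) U W" "op_dist (l2_sp R J) U W \<le> 2"
proof -
  have el: "l2norm R (\<lambda>x. U f x - W f x) \<le> 2" if "f \<in> l2space R" "l2norm R f \<le> 1" for f
    using assms that unfolding l2pres_def by (intro l2_diff2) auto
  have bdd: "bdd_above ((\<lambda>f. l2norm R (\<lambda>x. U f x - W f x)) ` {f \<in> l2space R. l2norm R f \<le> 1})"
    using el by (intro bdd_aboveI2) auto
  have "l2norm R (\<lambda>x. U (\<lambda>x. 0) x - W (\<lambda>x. 0) x) \<le> op_dist (l2_sp R J) U W"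
    unfolding l2opd_eq by (intro cSup_upper[OF _ bdd] rev_image_eqI[of "\<lambda>x. 0"]) (auto simp add: l2space_def l2norm_def)
  moreover have "0 \<le> l2norm R (\<lambda>x. U (\<lambda>x. 0) x - W (\<lambda>x. 0) x)" by (simp add: l2norm_def infsum_nonneg)
  ultimately show "0 \<le> op_dist (l2_sp R J) U W" by linarith
  have ne: "{f \<in> l2space R. l2norm R f \<le> 1} \<noteq> {}"
  proof -
    have "(\<lambda>x. 0) \<in> {f \<in> l2space R. l2norm R f \<le> 1}" by (simp add: l2space_def l2norm_def)
    thus ?thesis by blast
  qed
  show "op_dist (l2_sp R J) U W \<le> 2"
    unfolding l2opd_eq using ne el by (intro cSup_least) auto
qed

lemma sup_eq_gen:
  fixes X Y :: "real set"
  assumes "X \<noteq> {}" "Y \<noteq> {}" "bdd_above Y" "\<And>x. x \<in> X \<Longrightarrow> x \<le> Sup Y"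
    "\<And>y. y \<in> Y \<Longrightarrow> \<exists>x\<in>X. y \<le> x"
  shows "Sup X = Sup Y"
proof -
  have bX: "bdd_above X" using assms(4) by (auto simp: bdd_above_def)
  have "Sup X \<le> Sup Y" using assms by (intro cSup_least) auto
  moreover have "Sup Y \<le> Sup X"
  proof (rule cSup_least[OF assms(2)])
    fix y assume "y \<in> Y"
    then obtain x where "x \<in> X" "y \<le> x" using assms(5) by blast
    thus "y \<le> Sup X" using cSup_upper[OF _ bX] by fastforce
  qed
  ultimately show ?thesis by simp
qed



context indsetup begin

abbreviation cc where "cc x g \<equiv> x \<otimes> g \<otimes> inv rr (x \<otimes> g)"

lemma Rcar: "x \<in> R \<Longrightarrow> x \<in> carrier G" using Rc by blast

lemma cc_L: "x \<in> R \<Longrightarrow> g \<in> carrier G \<Longrightarrow> cc x g \<in> L"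
  using c_in_L[of "x \<otimes> g"] Rcar by simp

lemma ind_in: "x \<in> R \<Longrightarrow> induced G L R \<mu> g f x = \<mu> (cc x g) (f (rr (x \<otimes> g)))"
  by (simp add: induced_def)

lemma ind_out: "x \<notin> R \<Longrightarrow> induced G L R \<mu> g f x = 0"
  by (simp add: induced_def)

lemma ind_comp: assumes "g \<in> carrier G" "d \<in> carrier G" "x \<in> R"
  shows "induced G L R \<mu> g (induced G L R \<mu> d f) x
     = \<mu> (cc x g) (\<mu> (cc (rr (x \<otimes> g)) d) (f (rr (x \<otimes> (g \<otimes> d)))))"
proof -
  have xc: "x \<in> carrier G" using assms Rcar by simp
  have r1: "rr (x \<otimes> g) \<in> R" using rR xc assms by simp
  have e: "rr (rr (x \<otimes> g) \<otimes> d) = rr (x \<otimes> (g \<otimes> d))" using r_comp xc assms by (simp add: m_assoc)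
  show ?thesis using assms r1 by (simp add: ind_in e)
qed

lemma cc_comp: "x \<in> R \<Longrightarrow> g \<in> carrier G \<Longrightarrow> d \<in> carrier G \<Longrightarrow>
   cc x g \<otimes> cc (rr (x \<otimes> g)) d = cc x (g \<otimes> d)"
  using c_comp Rcar by simp

lemma one_L: "\<one> \<in> L" by (rule subgroup.one_closed[OF sub])

lemma mL: "a \<in> L \<Longrightarrow> b \<in> L \<Longrightarrow> a \<otimes> b \<in> L" by (rule subgroup.m_closed[OF sub])

lemma cc_one: "l \<in> L \<Longrightarrow> cc \<one> l = l" "l \<in> L \<Longrightarrow> rr (\<one> \<otimes> l) = \<one>"
  using Lc r_L by auto

lemma sig_e: "g \<in> L \<Longrightarrow> x \<in> R \<Longrightarrow> rr (x \<otimes> g) = \<one> \<longleftrightarrow> x = \<one>"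
  using r_one_iff by simp

lemma ind_pres:
  fixes \<mu> :: "'g \<Rightarrow> 'h::real_normed_vector \<Rightarrow> 'h"
  assumes uiso: "\<forall>l\<in>L. uiso (\<mu> l)" and g: "g \<in> carrier G"
  shows "l2pres R (induced G L R \<mu> g)"
  unfolding l2pres_def
proof
  fix f :: "'g \<Rightarrow> 'h" assume f: "f \<in> l2space R"
  have nx: "(norm (induced G L R \<mu> g f x))\<^sup>2 = (norm (f (rr (x \<otimes> g))))\<^sup>2" if x: "x \<in> R" for x
    using uiso cc_L[OF x g] unfolding uiso_def by (simp add: ind_in[OF x])
  have "(\<lambda>x. (norm (induced G L R \<mu> g f x))\<^sup>2) summable_on R
      \<longleftrightarrow> (\<lambda>x. (norm (f (rr (x \<otimes> g))))\<^sup>2) summable_on R"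
    by (rule summable_on_cong) (rule nx)
  also have "\<dots> \<longleftrightarrow> (\<lambda>x. (norm (f x))\<^sup>2) summable_on R"
    by (rule summable_on_reindex_bij_betw[OF sig_bij[OF g]])
  finally have s: "(\<lambda>x. (norm (induced G L R \<mu> g f x))\<^sup>2) summable_on R" using f by (simp add: l2space_def)
  have "(\<Sum>\<^sub>\<infinity>x\<in>R. (norm (induced G L R \<mu> g f x))\<^sup>2) = (\<Sum>\<^sub>\<infinity>x\<in>R. (norm (f (rr (x \<otimes> g))))\<^sup>2)"
    by (rule infsum_cong) (rule nx)
  also have "\<dots> = (\<Sum>\<^sub>\<infinity>x\<in>R. (norm (f x))\<^sup>2)"
    by (rule infsum_reindex_bij_betw[OF sig_bij[OF g]])
  finally have n: "l2norm R (induced G L R \<mu> g f) = l2norm R f" by (simp add: l2norm_def)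
  show "induced G L R \<mu> g f \<in> l2space R \<and> l2norm R (induced G L R \<mu> g f) = l2norm R f"
    using s n by (simp add: l2space_def ind_out)
qed

lemma part2:
  fixes \<mu>1 \<mu>2 :: "'g \<Rightarrow> 'h::real_normed_vector \<Rightarrow> 'h"
  assumes i1: "\<forall>l\<in>L. uiso (\<mu>1 l)" and i2: "\<forall>l\<in>L. uiso (\<mu>2 l)"
  shows "map_dist (l2_sp R J) G (induced G L R \<mu>1) (induced G L R \<mu>2)
      = map_dist (H_sp J) (G\<lparr>carrier := L\<rparr>) \<mu>1 \<mu>2"
proof -
  let ?Y = "(\<lambda>l. op_dist (H_sp J) (\<mu>1 l) (\<mu>2 l)) ` L"
  let ?X = "(\<lambda>g. op_dist (l2_sp R J) (induced G L R \<mu>1 g) (induced G L R \<mu>2 g)) ` carrier G"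
  let ?S = "\<lambda>g. (\<lambda>f. l2norm R (\<lambda>x. induced G L R \<mu>1 g f x - induced G L R \<mu>2 g f x)) ` {f \<in> l2space R. l2norm R f \<le> 1}"
  have bY: "bdd_above ?Y" by (intro bdd_aboveI2[where M=2] hop_range(2)) (use i1 i2 in auto)
  have elY: "op_dist (H_sp J) (\<mu>1 l) (\<mu>2 l) \<le> Sup ?Y" if "l \<in> L" for l
    using that by (intro cSup_upper[OF _ bY]) auto
  have Y0: "0 \<le> Sup ?Y"
    using elY[OF one_L] hop_range(1)[of "\<mu>1 \<one>" "\<mu>2 \<one>" J] i1 i2 one_L by (meson order_trans)
  have up: "bdd_above (?S g) \<and> op_dist (l2_sp R J) (induced G L R \<mu>1 g) (induced G L R \<mu>2 g) \<le> Sup ?Y"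
    if g: "g \<in> carrier G" for g
  proof -
    have b: "norm (\<mu>1 (cc x g) v - \<mu>2 (cc x g) v) \<le> Sup ?Y * norm v" if x: "x \<in> R" for x v
    proof -
      have "norm (\<mu>1 (cc x g) v - \<mu>2 (cc x g) v) \<le> op_dist (H_sp J) (\<mu>1 (cc x g)) (\<mu>2 (cc x g)) * norm v"
        using i1 i2 cc_L[OF x g] by (intro hop_mul) auto
      also have "\<dots> \<le> Sup ?Y * norm v" using elY[OF cc_L[OF x g]] by (intro mult_right_mono) auto
      finally show ?thesis .
    qed
    show ?thesis
      using l2_upper(1)[OF sig_bij[OF g], where \<Phi>="\<lambda>x v. \<mu>1 (cc x g) v - \<mu>2 (cc x g) v" and M="Sup ?Y"
          and U="induced G L R \<mu>1 g" and W="induced G L R \<mu>2 g"]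
        l2_upper(2)[OF sig_bij[OF g], where \<Phi>="\<lambda>x v. \<mu>1 (cc x g) v - \<mu>2 (cc x g) v" and M="Sup ?Y"
          and U="induced G L R \<mu>1 g" and W="induced G L R \<mu>2 g" and J=J] b Y0
      by (simp add: ind_in)
  qed
  have "Sup ?X = Sup ?Y"
  proof (rule sup_eq_gen)
    show "?X \<noteq> {}" by blast
    show "?Y \<noteq> {}" using one_L by blast
    show "bdd_above ?Y" by (rule bY)
    show "x \<le> Sup ?Y" if "x \<in> ?X" for x using that up by blast
    show "\<exists>x\<in>?X. y \<le> x" if "y \<in> ?Y" for y
    proof -
      obtain l where l: "l \<in> L" "y = op_dist (H_sp J) (\<mu>1 l) (\<mu>2 l)" using \<open>y \<in> ?Y\<close> by blast
      have lc: "l \<in> carrier G" using Lc l by simp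
      have "y \<le> op_dist (l2_sp R J) (induced G L R \<mu>1 l) (induced G L R \<mu>2 l)"
        unfolding l(2)
      proof (rule hop_least)
        fix v :: 'h assume v: "norm v \<le> 1"
        have "norm ((\<lambda>x v. \<mu>1 (cc x l) v - \<mu>2 (cc x l) v) \<one> v)
             \<le> op_dist (l2_sp R J) (induced G L R \<mu>1 l) (induced G L R \<mu>2 l)"
        proof (rule l2_lower[where \<sigma>="\<lambda>x. rr (x \<otimes> l)", OF oneR _ _ _ _ v])
          show "\<And>x. x \<in> R \<Longrightarrow> (rr (x \<otimes> l) = \<one>) = (x = \<one>)" using sig_e l by simp
          show "\<And>x. x \<in> R \<Longrightarrow> \<mu>1 (cc x l) 0 - \<mu>2 (cc x l) 0 = 0"
          proof -
            fix x assume "x \<in> R"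
            hence "cc x l \<in> L" using cc_L lc by simp
            thus "\<mu>1 (cc x l) 0 - \<mu>2 (cc x l) 0 = 0"
              using i1 i2 uiso_0[of "\<mu>1 (cc x l)"] uiso_0[of "\<mu>2 (cc x l)"] by simp
          qed
          show "\<And>f x. f \<in> l2space R \<Longrightarrow> x \<in> R \<Longrightarrow>
            induced G L R \<mu>1 l f x - induced G L R \<mu>2 l f x = \<mu>1 (cc x l) (f (rr (x \<otimes> l))) - \<mu>2 (cc x l) (f (rr (x \<otimes> l)))"
            by (simp add: ind_in)
          show "bdd_above (?S l)" using up[OF lc] by simp
        qed
        thus "norm (\<mu>1 l v - \<mu>2 l v) \<le> op_dist (l2_sp R J) (induced G L R \<mu>1 l) (induced G L R \<mu>2 l)"
          using cc_one(1)[OF l(1)] by simp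
      qed
      thus ?thesis using lc by blast
    qed
  qed
  thus ?thesis by (simp add: map_dist_def)
qed


lemma part1:
  fixes \<mu> :: "'g \<Rightarrow> 'h::real_normed_vector \<Rightarrow> 'h"
  assumes i: "\<forall>l\<in>L. uiso (\<mu> l)"
  shows "defect (l2_sp R J) G (induced G L R \<mu>) = defect (H_sp J) (G\<lparr>carrier := L\<rparr>) \<mu>"
proof -
  let ?Y = "(\<lambda>(a,b). op_dist (H_sp J) (\<mu> (a \<otimes> b)) (\<mu> a \<circ> \<mu> b)) ` (L \<times> L)"
  let ?X = "(\<lambda>(g,d). op_dist (l2_sp R J) (induced G L R \<mu> (g \<otimes> d)) (induced G L R \<mu> g \<circ> induced G L R \<mu> d)) ` (carrier G \<times> carrier G)"
  let ?S = "\<lambda>g d. (\<lambda>f. l2norm R (\<lambda>x. induced G L R \<mu> (g \<otimes> d) f x - (induced G L R \<mu> g \<circ> induced G L R \<mu> d) f x)) ` {f \<in> l2space R. l2norm R f \<le> 1}"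
  let ?\<Phi> = "\<lambda>g d x v. \<mu> (cc x (g \<otimes> d)) v - \<mu> (cc x g) (\<mu> (cc (rr (x \<otimes> g)) d) v)"
  have iab: "uiso (\<mu> (a \<otimes> b))" "uiso (\<mu> a \<circ> \<mu> b)" if "a \<in> L" "b \<in> L" for a b
    using i that mL by (auto intro: uiso_comp)
  have bY: "bdd_above ?Y" by (intro bdd_aboveI2[where M=2]) (auto intro!: hop_range(2) iab)
  have elY: "op_dist (H_sp J) (\<mu> (a \<otimes> b)) (\<mu> a \<circ> \<mu> b) \<le> Sup ?Y" if "a \<in> L" "b \<in> L" for a b
    using that by (intro cSup_upper[OF _ bY] rev_image_eqI[of "(a,b)"]) auto
  have Y0: "0 \<le> Sup ?Y" using elY[OF one_L one_L] hop_range(1)[OF iab[OF one_L one_L], of J] by linarith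
  have UW: "induced G L R \<mu> (g \<otimes> d) f x - (induced G L R \<mu> g \<circ> induced G L R \<mu> d) f x
      = ?\<Phi> g d x (f (rr (x \<otimes> (g \<otimes> d))))"
    if "g \<in> carrier G" "d \<in> carrier G" "x \<in> R" for f x g d
  proof -
    have "(induced G L R \<mu> g \<circ> induced G L R \<mu> d) f x = \<mu> (cc x g) (\<mu> (cc (rr (x \<otimes> g)) d) (f (rr (x \<otimes> (g \<otimes> d)))))"
      using ind_comp[OF that] by simp
    moreover have "induced G L R \<mu> (g \<otimes> d) f x = \<mu> (cc x (g \<otimes> d)) (f (rr (x \<otimes> (g \<otimes> d))))"
      by (rule ind_in[OF that(3)])
    ultimately show ?thesis by simp
  qed
  have up: "bdd_above (?S g d) \<and> op_dist (l2_sp R J) (induced G L R \<mu> (g \<otimes> d)) (induced G L R \<mu> g \<circ> induced G L R \<mu> d) \<le> Sup ?Y"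
    if g: "g \<in> carrier G" and d: "d \<in> carrier G" for g d
  proof -
    have gd: "g \<otimes> d \<in> carrier G" using g d by simp
    have b: "norm (?\<Phi> g d x v) \<le> Sup ?Y * norm v" if x: "x \<in> R" for x v
    proof -
      have a: "cc x g \<in> L" using cc_L x g by simp
      have bL: "cc (rr (x \<otimes> g)) d \<in> L" using cc_L rR Rcar x g d by simp
      have e: "cc x (g \<otimes> d) = cc x g \<otimes> cc (rr (x \<otimes> g)) d" using cc_comp x g d by simp
      have "norm (?\<Phi> g d x v) = norm (\<mu> (cc x g \<otimes> cc (rr (x \<otimes> g)) d) v - (\<mu> (cc x g) \<circ> \<mu> (cc (rr (x \<otimes> g)) d)) v)"
        using e by simp
      also have "\<dots> \<le> op_dist (H_sp J) (\<mu> (cc x g \<otimes> cc (rr (x \<otimes> g)) d)) (\<mu> (cc x g) \<circ> \<mu> (cc (rr (x \<otimes> g)) d)) * norm v"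
        using iab[OF a bL] by (rule hop_mul)
      also have "\<dots> \<le> Sup ?Y * norm v" using elY[OF a bL] by (intro mult_right_mono) auto
      finally show ?thesis .
    qed
    have UW': "\<And>f x. f \<in> l2space R \<Longrightarrow> x \<in> R \<Longrightarrow> induced G L R \<mu> (g \<otimes> d) f x - (induced G L R \<mu> g \<circ> induced G L R \<mu> d) f x
      = ?\<Phi> g d x (f (rr (x \<otimes> (g \<otimes> d))))" using UW g d by blast
    show ?thesis
      using l2_upper(1)[where \<Phi>="?\<Phi> g d" and M="Sup ?Y" and U="induced G L R \<mu> (g \<otimes> d)" and W="induced G L R \<mu> g \<circ> induced G L R \<mu> d" and \<sigma>="\<lambda>x. rr (x \<otimes> (g \<otimes> d))", OF sig_bij[OF gd] b Y0 UW']
            l2_upper(2)[where \<Phi>="?\<Phi> g d" and M="Sup ?Y" and J=J and U="induced G L R \<mu> (g \<otimes> d)" and W="induced G L R \<mu> g \<circ> induced G L R \<mu> d" and \<sigma>="\<lambda>x. rr (x \<otimes> (g \<otimes> d))", OF sig_bij[OF gd] b Y0 UW'] by simp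
  qed
  have "Sup ?X = Sup ?Y"
  proof (rule sup_eq_gen)
    have "(\<one>, \<one>) \<in> carrier G \<times> carrier G" by simp
    thus "?X \<noteq> {}" unfolding image_is_empty by (intro notI) simp
    have "(\<one>, \<one>) \<in> L \<times> L" using one_L by simp
    thus "?Y \<noteq> {}" unfolding image_is_empty by (intro notI) simp
    show "bdd_above ?Y" by (rule bY)
    show "x \<le> Sup ?Y" if xX: "x \<in> ?X" for x
    proof -
      obtain p where xe: "x = (\<lambda>(g,d). op_dist (l2_sp R J) (induced G L R \<mu> (g \<otimes> d)) (induced G L R \<mu> g \<circ> induced G L R \<mu> d)) p"
        and p: "p \<in> carrier G \<times> carrier G" using xX by (rule imageE)
      obtain g d where pe: "p = (g, d)" by (cases p)
      have g: "g \<in> carrier G" and d: "d \<in> carrier G" using p pe by auto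
      have xe': "x = op_dist (l2_sp R J) (induced G L R \<mu> (g \<otimes> d)) (induced G L R \<mu> g \<circ> induced G L R \<mu> d)"
        using xe pe by (simp only: case_prod_conv)
      show ?thesis unfolding xe' using up[OF g d] by (rule conjunct2)
    qed
    show "\<exists>x\<in>?X. y \<le> x" if "y \<in> ?Y" for y
    proof -
      obtain p where ye: "y = (\<lambda>(a,b). op_dist (H_sp J) (\<mu> (a \<otimes> b)) (\<mu> a \<circ> \<mu> b)) p"
        and p: "p \<in> L \<times> L" using \<open>y \<in> ?Y\<close> by (rule imageE)
      obtain a b where pe: "p = (a, b)" by (cases p)
      have ab1: "a \<in> L" and ab2: "b \<in> L" using p pe by auto
      have ab3: "y = op_dist (H_sp J) (\<mu> (a \<otimes> b)) (\<mu> a \<circ> \<mu> b)"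
        using ye pe by (simp only: case_prod_conv)
      note ab = ab1 ab2 ab3
      have ac: "a \<in> carrier G" by (rule Lc[OF ab1])
      have bc: "b \<in> carrier G" by (rule Lc[OF ab2])
      have abL: "a \<otimes> b \<in> L" by (rule mL[OF ab1 ab2])
      have "y \<le> op_dist (l2_sp R J) (induced G L R \<mu> (a \<otimes> b)) (induced G L R \<mu> a \<circ> induced G L R \<mu> b)"
        unfolding ab(3)
      proof (rule hop_least)
        fix v :: 'h assume v: "norm v \<le> 1"
        have "norm (?\<Phi> a b \<one> v)
             \<le> op_dist (l2_sp R J) (induced G L R \<mu> (a \<otimes> b)) (induced G L R \<mu> a \<circ> induced G L R \<mu> b)"
        proof (rule l2_lower[where \<sigma>="\<lambda>x. rr (x \<otimes> (a \<otimes> b))", OF oneR _ _ _ _ v])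
          show "\<And>x. x \<in> R \<Longrightarrow> (rr (x \<otimes> (a \<otimes> b)) = \<one>) = (x = \<one>)" using sig_e abL by simp
          show "\<And>x. x \<in> R \<Longrightarrow> ?\<Phi> a b x 0 = 0"
          proof -
            fix x assume x: "x \<in> R"
            have L1: "cc x (a \<otimes> b) \<in> L" "cc x a \<in> L" "cc (rr (x \<otimes> a)) b \<in> L"
              using cc_L rR Rcar x ac bc by auto
            thus "?\<Phi> a b x 0 = 0"
              using i uiso_0[of "\<mu> (cc x (a \<otimes> b))"] uiso_0[of "\<mu> (cc x a)"] uiso_0[of "\<mu> (cc (rr (x \<otimes> a)) b)"]
              by simp
          qed
          show "\<And>f x. f \<in> l2space R \<Longrightarrow> x \<in> R \<Longrightarrow>
            induced G L R \<mu> (a \<otimes> b) f x - (induced G L R \<mu> a \<circ> induced G L R \<mu> b) f x = ?\<Phi> a b x (f (rr (x \<otimes> (a \<otimes> b))))"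
            using UW[OF ac bc] by simp
          show "bdd_above (?S a b)" using up[OF ac bc] by (rule conjunct1)
        qed
        thus "norm (\<mu> (a \<otimes> b) v - (\<mu> a \<circ> \<mu> b) v) \<le> op_dist (l2_sp R J) (induced G L R \<mu> (a \<otimes> b)) (induced G L R \<mu> a \<circ> induced G L R \<mu> b)"
          using cc_one[OF ab(1)] cc_one[OF ab(2)] cc_one[OF abL] by simp
      qed
      moreover have "op_dist (l2_sp R J) (induced G L R \<mu> (a \<otimes> b)) (induced G L R \<mu> a \<circ> induced G L R \<mu> b) \<in> ?X"
        by (rule rev_image_eqI[of "(a,b)"]) (simp_all add: ac bc)
      ultimately show ?thesis
        by (intro bexI[where x="op_dist (l2_sp R J) (induced G L R \<mu> (a \<otimes> b)) (induced G L R \<mu> a \<circ> induced G L R \<mu> b)"])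
    qed
  qed
  thus ?thesis by (simp add: defect_def)
qed

end


context indsetup begin

lemma unit_l2pres: assumes "unitary_op (l2_sp R J) U" shows "l2pres R U"
proof -
  have a: "U ` l2space R = l2space R" "\<forall>f\<in>l2space R. l2norm R (U f) = l2norm R f"
    using assms by (simp_all add: unitary_op_def l2_sp_def)
  have "U f \<in> l2space R" if "f \<in> l2space R" for f using a(1) that by blast
  thus ?thesis using a(2) by (simp add: l2pres_def)
qed

lemma ind_rep:
  fixes \<nu> :: "'g \<Rightarrow> 'h::real_inner \<Rightarrow> 'h"
  assumes rep: "unitary_rep (H_sp J) (G\<lparr>carrier := L\<rparr>) \<nu>" and cs: "complex_structure J"
  shows "unitary_rep (l2_sp R J) G (induced G L R \<nu>)"
proof -
  have u: "\<And>l. l \<in> L \<Longrightarrow> unitary_op (H_sp J) (\<nu> l)" using rep by (simp add: unitary_rep_def)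
  have mul: "\<And>a b v. a \<in> L \<Longrightarrow> b \<in> L \<Longrightarrow> \<nu> (a \<otimes> b) v = \<nu> a (\<nu> b v)"
    using rep by (simp add: unitary_rep_def H_sp_def)
  have add: "\<And>l v w. l \<in> L \<Longrightarrow> \<nu> l (v + w) = \<nu> l v + \<nu> l w"
    using u by (simp add: unitary_op_def H_sp_def)
  have scl: "\<And>l c v. l \<in> L \<Longrightarrow> \<nu> l (c *\<^sub>R v) = c *\<^sub>R \<nu> l v"
    using u by (simp add: unitary_op_def H_sp_def)
  have jj: "\<And>l v. l \<in> L \<Longrightarrow> \<nu> l (J v) = J (\<nu> l v)"
    using u by (simp add: unitary_op_def H_sp_def)
  have sj: "\<And>l. l \<in> L \<Longrightarrow> surj (\<nu> l)"
    using u by (simp add: unitary_op_def H_sp_def)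
  have isos: "\<forall>l\<in>L. uiso (\<nu> l)" using u unit_uiso by blast
  have J0: "J 0 = 0" using cs by (simp add: complex_structure_def linear_0)
  have nu1: "\<nu> \<one> w = w" for w
  proof -
    obtain u0 where w: "w = \<nu> \<one> u0" using surjD[OF sj[OF one_L]] by blast
    have "\<nu> \<one> w = \<nu> (\<one> \<otimes> \<one>) u0" unfolding w by (rule mul[OF one_L one_L, symmetric])
    thus ?thesis using w by simp
  qed
  have mult_ind: "induced G L R \<nu> (g \<otimes> d) f = induced G L R \<nu> g (induced G L R \<nu> d f)"
    if g: "g \<in> carrier G" and d: "d \<in> carrier G" for g d f
  proof
    fix x show "induced G L R \<nu> (g \<otimes> d) f x = induced G L R \<nu> g (induced G L R \<nu> d f) x"
    proof (cases "x \<in> R")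
      case True
      have a: "cc x g \<in> L" using cc_L True g by simp
      have bL: "cc (rr (x \<otimes> g)) d \<in> L" using cc_L rR Rcar True g d by simp
      have "induced G L R \<nu> g (induced G L R \<nu> d f) x
          = \<nu> (cc x g) (\<nu> (cc (rr (x \<otimes> g)) d) (f (rr (x \<otimes> (g \<otimes> d)))))"
        by (rule ind_comp[OF g d True])
      also have "\<dots> = \<nu> (cc x g \<otimes> cc (rr (x \<otimes> g)) d) (f (rr (x \<otimes> (g \<otimes> d))))"
        by (rule mul[OF a bL, symmetric])
      also have "\<dots> = \<nu> (cc x (g \<otimes> d)) (f (rr (x \<otimes> (g \<otimes> d))))"
        using cc_comp[OF True g d] by simp
      also have "\<dots> = induced G L R \<nu> (g \<otimes> d) f x" by (rule ind_in[OF True, symmetric])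
      finally show ?thesis by simp
    next
      case False thus ?thesis by (simp add: ind_out)
    qed
  qed
  have ind1: "induced G L R \<nu> \<one> f = f" if f: "f \<in> l2space R" for f
  proof
    fix x show "induced G L R \<nu> \<one> f x = f x"
    proof (cases "x \<in> R")
      case True
      have xc: "x \<in> carrier G" using Rcar True by simp
      have e1: "x \<otimes> \<one> = x" using xc by simp
      have "induced G L R \<nu> \<one> f x = \<nu> (x \<otimes> \<one> \<otimes> inv rr (x \<otimes> \<one>)) (f (rr (x \<otimes> \<one>)))"
        by (rule ind_in[OF True])
      also have "\<dots> = \<nu> (x \<otimes> inv x) (f x)" unfolding e1 r_R[OF True] ..
      also have "\<dots> = f x" using xc nu1 by simp
      finally show ?thesis .
    next
      case False thus ?thesis using f by (simp add: ind_out l2space_def)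
    qed
  qed
  have uop: "unitary_op (l2_sp R J) (induced G L R \<nu> g)" if g: "g \<in> carrier G" for g
  proof -
    have pres: "l2pres R (induced G L R \<nu> g)" by (rule ind_pres[OF isos g])
    have presi: "l2pres R (induced G L R \<nu> (inv g))" by (rule ind_pres[OF isos inv_closed[OF g]])
    have img: "induced G L R \<nu> g ` l2space R = l2space R"
    proof
      show "induced G L R \<nu> g ` l2space R \<subseteq> l2space R" using pres by (auto simp: l2pres_def)
      show "l2space R \<subseteq> induced G L R \<nu> g ` l2space R"
      proof
        fix h :: "'g \<Rightarrow> 'h" assume h: "h \<in> l2space R"
        have fi: "induced G L R \<nu> (inv g) h \<in> l2space R" using presi h by (simp add: l2pres_def)
        have "induced G L R \<nu> g (induced G L R \<nu> (inv g) h) = induced G L R \<nu> (g \<otimes> inv g) h"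
          by (rule mult_ind[OF g inv_closed[OF g], symmetric])
        also have "\<dots> = h" using g ind1[OF h] by simp
        finally show "h \<in> induced G L R \<nu> g ` l2space R" using fi by (metis image_eqI)
      qed
    qed
    have c2: "induced G L R \<nu> g (\<lambda>x. f x + h x) = (\<lambda>x. induced G L R \<nu> g f x + induced G L R \<nu> g h x)" for f h
    proof
      fix x show "induced G L R \<nu> g (\<lambda>x. f x + h x) x = induced G L R \<nu> g f x + induced G L R \<nu> g h x"
        using add[OF cc_L[OF _ g]] by (cases "x \<in> R") (simp_all add: ind_in ind_out)
    qed
    have c3: "induced G L R \<nu> g (\<lambda>x. c *\<^sub>R f x) = (\<lambda>x. c *\<^sub>R induced G L R \<nu> g f x)" for c f
    proof
      fix x show "induced G L R \<nu> g (\<lambda>x. c *\<^sub>R f x) x = c *\<^sub>R induced G L R \<nu> g f x"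
        using scl[OF cc_L[OF _ g]] by (cases "x \<in> R") (simp_all add: ind_in ind_out)
    qed
    have c4: "induced G L R \<nu> g (\<lambda>x. J (f x)) = (\<lambda>x. J (induced G L R \<nu> g f x))" for f
    proof
      fix x show "induced G L R \<nu> g (\<lambda>x. J (f x)) x = J (induced G L R \<nu> g f x)"
        using jj[OF cc_L[OF _ g]] J0 by (cases "x \<in> R") (simp_all add: ind_in ind_out)
    qed
    have c5: "\<forall>f\<in>l2space R. l2norm R (induced G L R \<nu> g f) = l2norm R f" using pres by (simp add: l2pres_def)
    show ?thesis unfolding unitary_op_def l2_sp_def using img c2 c3 c4 c5 by simp
  qed
  have A: "\<forall>g\<in>carrier G. unitary_op (l2_sp R J) (induced G L R \<nu> g)" using uop by blast
  have B: "\<forall>x\<in>carrier G. \<forall>y\<in>carrier G. \<forall>v\<in>l2space R. induced G L R \<nu> (x \<otimes> y) v = induced G L R \<nu> x (induced G L R \<nu> y v)"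
    using mult_ind by blast
  show ?thesis unfolding unitary_rep_def using A B by (simp add: l2_sp_def)
qed

lemma part3:
  fixes \<mu> :: "'g \<Rightarrow> 'h::real_inner \<Rightarrow> 'h"
  assumes u: "\<forall>l\<in>L. unitary_op (H_sp J) (\<mu> l)" and cs: "complex_structure J"
  shows "dist_rep (l2_sp R J) G (induced G L R \<mu>) \<le> dist_rep (H_sp J) (G\<lparr>carrier := L\<rparr>) \<mu>"
proof -
  let ?SL = "(\<lambda>\<nu>. map_dist (l2_sp R J) G (induced G L R \<mu>) \<nu>) ` {\<nu>. unitary_rep (l2_sp R J) G \<nu>}"
  let ?SH = "(\<lambda>\<nu>. map_dist (H_sp J) (G\<lparr>carrier := L\<rparr>) \<mu> \<nu>) ` {\<nu>. unitary_rep (H_sp J) (G\<lparr>carrier := L\<rparr>) \<nu>}"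
  have iso\<mu>: "\<forall>l\<in>L. uiso (\<mu> l)" using u unit_uiso by blast
  have idrep: "unitary_rep (H_sp J) (G\<lparr>carrier := L\<rparr>) (\<lambda>_. id)"
    by (simp add: unitary_rep_def unitary_op_def H_sp_def)
  have ne: "?SH \<noteq> {}" using idrep unfolding image_is_empty by (intro notI) simp
  have bdd: "bdd_below ?SL"
  proof (rule bdd_belowI2[where m=0])
    fix \<nu>' assume "\<nu>' \<in> {\<nu>. unitary_rep (l2_sp R J) G \<nu>}"
    hence un: "\<And>g. g \<in> carrier G \<Longrightarrow> unitary_op (l2_sp R J) (\<nu>' g)" by (simp add: unitary_rep_def)
    let ?T = "(\<lambda>g. op_dist (l2_sp R J) (induced G L R \<mu> g) (\<nu>' g)) ` carrier G"
    have r: "0 \<le> op_dist (l2_sp R J) (induced G L R \<mu> g) (\<nu>' g) \<and> op_dist (l2_sp R J) (induced G L R \<mu> g) (\<nu>' g) \<le> 2"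
      if g: "g \<in> carrier G" for g
      using l2opd_range[OF ind_pres[OF iso\<mu> g] unit_l2pres[OF un[OF g]]] by simp
    have bT: "bdd_above ?T" by (intro bdd_aboveI2[where M=2]) (use r in auto)
    have "0 \<le> op_dist (l2_sp R J) (induced G L R \<mu> \<one>) (\<nu>' \<one>)" using r by simp
    also have "\<dots> \<le> Sup ?T" by (rule cSup_upper[OF _ bT]) simp
    finally show "0 \<le> map_dist (l2_sp R J) G (induced G L R \<mu>) \<nu>'" by (simp add: map_dist_def)
  qed
  have "Inf ?SL \<le> Inf ?SH"
  proof (rule cInf_greatest[OF ne])
    fix y assume yH: "y \<in> ?SH"
    obtain \<nu> where ye: "y = (\<lambda>\<nu>. map_dist (H_sp J) (G\<lparr>carrier := L\<rparr>) \<mu> \<nu>) \<nu>"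
      and \<nu>: "\<nu> \<in> {\<nu>. unitary_rep (H_sp J) (G\<lparr>carrier := L\<rparr>) \<nu>}" using yH by (rule imageE)
    have \<nu>r: "unitary_rep (H_sp J) (G\<lparr>carrier := L\<rparr>) \<nu>" using \<nu> by simp
    have "\<forall>l\<in>L. unitary_op (H_sp J) (\<nu> l)" using \<nu>r by (simp add: unitary_rep_def)
    hence iso\<nu>: "\<forall>l\<in>L. uiso (\<nu> l)" using unit_uiso by blast
    have "y = map_dist (l2_sp R J) G (induced G L R \<mu>) (induced G L R \<nu>)"
      using part2[OF iso\<mu> iso\<nu>] ye by simp
    moreover have "map_dist (l2_sp R J) G (induced G L R \<mu>) (induced G L R \<nu>) \<in> ?SL"
      by (rule imageI) (simp add: ind_rep[OF \<nu>r cs])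
    ultimately show "Inf ?SL \<le> y" using cInf_lower[OF _ bdd] by simp
  qed
  thus ?thesis by (simp add: dist_rep_def)
qed

end

theorem lemma1p4:
  fixes G :: "('g, 'b) monoid_scheme"
    and L R :: "'g set"
    and J :: "'h::{real_inner, complete_space} \<Rightarrow> 'h"
    and \<mu> \<mu>1 \<mu>2 :: "'g \<Rightarrow> 'h \<Rightarrow> 'h"
  assumes "group G"
    and "subgroup L G"
    and "R \<subseteq> carrier G"
    and "\<forall>g\<in>carrier G. \<exists>!r. r \<in> R \<and> r \<in> L #>\<^bsub>G\<^esub> g"
    and "\<one>\<^bsub>G\<^esub> \<in> R"
    and "complex_structure J"
    and "\<forall>l\<in>L. unitary_op (H_sp J) (\<mu> l)"
    and "\<forall>l\<in>L. unitary_op (H_sp J) (\<mu>1 l)"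
    and "\<forall>l\<in>L. unitary_op (H_sp J) (\<mu>2 l)"
  shows "defect (l2_sp R J) G (induced G L R \<mu>) = defect (H_sp J) (G\<lparr>carrier := L\<rparr>) \<mu>
    \<and> map_dist (l2_sp R J) G (induced G L R \<mu>1) (induced G L R \<mu>2)
        = map_dist (H_sp J) (G\<lparr>carrier := L\<rparr>) \<mu>1 \<mu>2
    \<and> dist_rep (l2_sp R J) G (induced G L R \<mu>) \<le> dist_rep (H_sp J) (G\<lparr>carrier := L\<rparr>) \<mu>"
proof -
  have I: "indsetup G L R" using assms(1-5) by (intro indsetup.intro indsetup_axioms.intro)
  then interpret I: indsetup G L R .
  have i: "\<forall>l\<in>L. uiso (\<mu> l)" using assms(7) unit_uiso by blast
  have i1: "\<forall>l\<in>L. uiso (\<mu>1 l)" using assms(8) unit_uiso by blast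
  have i2: "\<forall>l\<in>L. uiso (\<mu>2 l)" using assms(9) unit_uiso by blast
  show ?thesis
  proof (intro conjI)
    show "defect (l2_sp R J) G (induced G L R \<mu>) = defect (H_sp J) (G\<lparr>carrier := L\<rparr>) \<mu>"
      by (rule I.part1[OF i])
    show "map_dist (l2_sp R J) G (induced G L R \<mu>1) (induced G L R \<mu>2)
        = map_dist (H_sp J) (G\<lparr>carrier := L\<rparr>) \<mu>1 \<mu>2"
      by (rule I.part2[OF i1 i2])
    show "dist_rep (l2_sp R J) G (induced G L R \<mu>) \<le> dist_rep (H_sp J) (G\<lparr>carrier := L\<rparr>) \<mu>"
      by (rule I.part3[OF assms(7) assms(6)])
  qed
qed

end
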